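(* Let $F$ be an infinite field, $n=2$, and let $f=[z,a_1y_1,\dots,a_ny_n]$ and $g=[z,a'_1y_1,\dots,a'_my_m]$ be elements of $\mathcal{B}=\{[z,a_1y_1,\dots,a_ny_n]\mid n\ge1,\ a_i>0\}$. If $V_f\le V_g$, then $g\in\langle\{f\}\cup I\rangle_{T_{\mathbb{Z}_2}}$.
   Context: $UT_2(F)^{(-)}$ is the Lie algebra of $2\times2$ upper triangular matrices with bracket $[a,b]=ab-ba$ and canonical $\mathbb{Z}_2$-grading ($e_{11},e_{22}$ of degree $0$, $e_{12}$ of degree $1$); $I$ is its $T_{\mathbb{Z}_2}$-ideal of graded identities in the free Lie algebra on variables $y_i$ of degree $0$ and $z_i$ of degree $1$; $z$ is a variable of degree $1$. Commutators are left normed and $[z,a_1y_1,\dots,a_ny_n]$ denotes $[z,y_1,\dots,y_1,\dots,y_n,\dots,y_n]$ with $y_i$ repeated $a_i$ times. $\langle S\rangle_{T_{\mathbb{Z}_2}}$ is the $T_{\mathbb{Z}_2}$-ideal generated by $S$. For $f=[z,a_1y_1,\dots,a_ny_n]$ put $V_f=(a_1,\dots,a_n)$. For finite sequences of positive integers, $(a_1,\dots,a_n)\le(a'_1,\dots,a'_m)$ means there is a strictly increasing map $\varphi:\{1,\dots,n\}\to\{1,\dots,m\}$ with $a_i\le a'_{\varphi(i)}$ for all $i$. *)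

theory Defs
  imports "Jordan_Normal_Form.Matrix"
begin

text \<open>Graded variables: Y i has degree 0, Z i has degree 1.\<close>
datatype gvar = Y nat | Z nat

text \<open>Free associative algebra F<X>: noncommutative polynomials as coefficient
  functions on words. The free Lie algebra is realised (as usual) as the Lie
  subalgebra of F<X> generated by the variables.\<close>
type_synonym 'a ncpoly = "gvar list \<Rightarrow> 'a"

definition nc_one :: "'a::comm_ring_1 ncpoly" where
  "nc_one = (\<lambda>w. if w = [] then 1 else 0)"

definition nc_var :: "gvar \<Rightarrow> 'a::comm_ring_1 ncpoly" where
  "nc_var x = (\<lambda>w. if w = [x] then 1 else 0)"

definition nc_mul :: "'a::comm_ring_1 ncpoly \<Rightarrow> 'a ncpoly \<Rightarrow> 'a ncpoly" where
  "nc_mul p q = (\<lambda>w. \<Sum>i\<le>length w. p (take i w) * q (drop i w))"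

definition lie_br :: "'a::comm_ring_1 ncpoly \<Rightarrow> 'a ncpoly \<Rightarrow> 'a ncpoly" where
  "lie_br p q = (\<lambda>w. nc_mul p q w - nc_mul q p w)"

inductive_set lie_elems :: "'a::field ncpoly set" where
  var: "nc_var x \<in> lie_elems"
| add: "p \<in> lie_elems \<Longrightarrow> q \<in> lie_elems \<Longrightarrow> (\<lambda>w. p w + q w) \<in> lie_elems"
| smult: "p \<in> lie_elems \<Longrightarrow> (\<lambda>w. c * p w) \<in> lie_elems"
| br: "p \<in> lie_elems \<Longrightarrow> q \<in> lie_elems \<Longrightarrow> lie_br p q \<in> lie_elems"

definition zdeg :: "gvar list \<Rightarrow> nat" where
  "zdeg w = length (filter (\<lambda>x. case x of Z _ \<Rightarrow> True | Y _ \<Rightarrow> False) w)"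

definition hom_even :: "'a::field ncpoly \<Rightarrow> bool" where
  "hom_even p \<longleftrightarrow> (\<forall>w. p w \<noteq> 0 \<longrightarrow> even (zdeg w))"

definition hom_odd :: "'a::field ncpoly \<Rightarrow> bool" where
  "hom_odd p \<longleftrightarrow> (\<forall>w. p w \<noteq> 0 \<longrightarrow> odd (zdeg w))"

definition nc_subst :: "(gvar \<Rightarrow> 'a::field ncpoly) \<Rightarrow> 'a ncpoly \<Rightarrow> 'a ncpoly" where
  "nc_subst \<sigma> p = (\<lambda>w. \<Sum>u\<in>{u. p u \<noteq> 0}.
      p u * foldr (\<lambda>x acc. nc_mul (\<sigma> x) acc) u nc_one w)"

definition graded_subst :: "(gvar \<Rightarrow> 'a::field ncpoly) \<Rightarrow> bool" where
  "graded_subst \<sigma> \<longleftrightarrow> (\<forall>i. \<sigma> (Y i) \<in> lie_elems \<and> hom_even (\<sigma> (Y i))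
                          \<and> \<sigma> (Z i) \<in> lie_elems \<and> hom_odd (\<sigma> (Z i)))"

definition T_ideal :: "'a::field ncpoly set \<Rightarrow> bool" where
  "T_ideal J \<longleftrightarrow> J \<subseteq> lie_elems \<and> (\<lambda>w. 0) \<in> J
     \<and> (\<forall>p\<in>J. \<forall>q\<in>J. (\<lambda>w. p w + q w) \<in> J)
     \<and> (\<forall>p\<in>J. \<forall>c. (\<lambda>w. c * p w) \<in> J)
     \<and> (\<forall>p\<in>J. \<forall>q\<in>lie_elems. lie_br p q \<in> J)
     \<and> (\<forall>p\<in>J. \<forall>\<sigma>. graded_subst \<sigma> \<longrightarrow> nc_subst \<sigma> p \<in> J)"

definition T_ideal_gen :: "'a::field ncpoly set \<Rightarrow> 'a ncpoly set" where
  "T_ideal_gen S = \<Inter>{J. T_ideal J \<and> S \<subseteq> J}"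

definition graded_UT2_eval :: "(gvar \<Rightarrow> 'a::field mat) \<Rightarrow> bool" where
  "graded_UT2_eval \<phi> \<longleftrightarrow> (\<forall>i.
      \<phi> (Y i) \<in> carrier_mat 2 2 \<and> \<phi> (Y i) $$ (0,1) = 0 \<and> \<phi> (Y i) $$ (1,0) = 0
    \<and> \<phi> (Z i) \<in> carrier_mat 2 2 \<and> \<phi> (Z i) $$ (0,0) = 0 \<and> \<phi> (Z i) $$ (1,0) = 0
    \<and> \<phi> (Z i) $$ (1,1) = 0)"

text \<open>Entry (i,j) of the evaluation of p (the Lie bracket of UT_2^(-) is ab-ba,
  so evaluating the Lie element inside the associative algebra is correct).\<close>
definition eval_UT2 :: "(gvar \<Rightarrow> 'a::field mat) \<Rightarrow> 'a ncpoly \<Rightarrow> nat \<Rightarrow> nat \<Rightarrow> 'a" where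
  "eval_UT2 \<phi> p i j = (\<Sum>u\<in>{u. p u \<noteq> 0}.
      p u * (foldr (\<lambda>x acc. \<phi> x * acc) u (1\<^sub>m 2)) $$ (i,j))"

definition UT2_ids :: "'a::field ncpoly set" where
  "UT2_ids = {p \<in> lie_elems. \<forall>\<phi>. graded_UT2_eval \<phi> \<longrightarrow>
                 (\<forall>i<2. \<forall>j<2. eval_UT2 \<phi> p i j = 0)}"

text \<open>[z, a_1 y_1, ..., a_n y_n] with as = [a_1,...,a_n]; z = Z 0, y_k = Y (k-1).\<close>
definition comm_B :: "nat list \<Rightarrow> 'a::field ncpoly" where
  "comm_B as = foldl (\<lambda>p x. lie_br p (nc_var x)) (nc_var (Z 0))
      (concat (map (\<lambda>k. replicate (as ! k) (Y k)) [0..<length as]))"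

definition in_B_seq :: "nat list \<Rightarrow> bool" where
  "in_B_seq as \<longleftrightarrow> as \<noteq> [] \<and> (\<forall>a\<in>set as. 0 < a)"

definition seq_le :: "nat list \<Rightarrow> nat list \<Rightarrow> bool" where
  "seq_le as bs \<longleftrightarrow> (\<exists>\<phi>::nat \<Rightarrow> nat. strict_mono_on {..<length as} \<phi> \<and>
      (\<forall>i<length as. \<phi> i < length bs \<and> as ! i \<le> bs ! (\<phi> i)))"

end

theory Submission
  imports Defs "HOL-Library.Multiset"
begin


definition Lin :: "(gvar list \<Rightarrow> 'a::comm_ring_1) \<Rightarrow> 'a ncpoly \<Rightarrow> 'a" where
  "Lin F p = (\<Sum>u\<in>{u. p u \<noteq> 0}. p u * F u)"

abbreviation fs :: "'a::comm_ring_1 ncpoly \<Rightarrow> bool" where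
  "fs p \<equiv> finite {u. p u \<noteq> 0}"

definition ind :: "gvar list \<Rightarrow> 'a::comm_ring_1 ncpoly" where
  "ind u = (\<lambda>w. if w = u then 1 else 0)"

lemma Lin_superset: "finite A \<Longrightarrow> {u. p u \<noteq> 0} \<subseteq> A \<Longrightarrow> Lin F p = (\<Sum>u\<in>A. p u * F u)"
  unfolding Lin_def by (rule sum.mono_neutral_left) auto

lemma Lin_lin:
  assumes "fs p" "fs q"
  shows "Lin F (\<lambda>w. a * p w + b * q w) = a * Lin F p + b * Lin F q"
proof -
  let ?A = "{u. p u \<noteq> 0} \<union> {u. q u \<noteq> 0}"
  have fA: "finite ?A" using assms by auto
  have "Lin F (\<lambda>w. a * p w + b * q w) = (\<Sum>u\<in>?A. (a * p u + b * q u) * F u)"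
    by (rule Lin_superset[OF fA]) auto
  also have "\<dots> = a * (\<Sum>u\<in>?A. p u * F u) + b * (\<Sum>u\<in>?A. q u * F u)"
    by (simp add: sum_distrib_left sum.distrib algebra_simps)
  also have "\<dots> = a * Lin F p + b * Lin F q"
    using Lin_superset[OF fA, of p F] Lin_superset[OF fA, of q F] by auto
  finally show ?thesis .
qed

lemma Lin_sub:
  assumes "fs p" "fs q"
  shows "Lin F (\<lambda>w. p w - q w) = Lin F p - Lin F q"
  using Lin_lin[OF assms, of F 1 "-1"] by simp

lemma Lin_ind: "Lin F (ind u) = F u"
proof -
  have "{w. ind u w \<noteq> (0::'a)} = {u}" by (auto simp: ind_def)
  then show ?thesis by (simp add: Lin_def ind_def)
qed

lemma fs_ind: "fs (ind u)"
proof -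
  have "{w. ind u w \<noteq> (0::'a)} = {u}" by (auto simp: ind_def)
  then show ?thesis by simp
qed

lemma nc_var_ind: "nc_var x = ind [x]" by (simp add: nc_var_def ind_def fun_eq_iff)
lemma nc_one_ind: "nc_one = ind []" by (simp add: nc_one_def ind_def fun_eq_iff)

lemma K: "(\<Sum>i\<le>length t. if take i t = U1 \<and> drop i t = U2 then c else 0) = (if U1 @ U2 = t then c else 0)"
proof -
  have eq: "(take i t = U1 \<and> drop i t = U2) \<longleftrightarrow> (i = length U1 \<and> U1 @ U2 = t)" if "i \<le> length t" for i
  proof
    assume "take i t = U1 \<and> drop i t = U2"
    then show "i = length U1 \<and> U1 @ U2 = t" using that by auto
  next
    assume "i = length U1 \<and> U1 @ U2 = t"
    then show "take i t = U1 \<and> drop i t = U2" by auto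
  qed
  have "(\<Sum>i\<le>length t. if take i t = U1 \<and> drop i t = U2 then c else 0)
      = (\<Sum>i\<le>length t. if i = length U1 then (if U1 @ U2 = t then c else 0) else 0)"
    by (rule sum.cong) (auto simp: eq)
  also have "\<dots> = (if U1 @ U2 = t then c else 0)"
    by (subst sum.delta) auto
  finally show ?thesis .
qed

lemma nc_mul_ind: "nc_mul (ind u) (ind v) = (ind (u @ v) :: 'a::comm_ring_1 ncpoly)"
proof
  fix t
  have "(nc_mul (ind u) (ind v) t :: 'a) = (\<Sum>i\<le>length t. if take i t = u \<and> drop i t = v then (1::'a) else 0)"
    unfolding nc_mul_def ind_def by (rule sum.cong) auto
  also have "\<dots> = (ind (u @ v) t :: 'a)" by (subst K) (auto simp: ind_def)
  finally show "(nc_mul (ind u) (ind v) t :: 'a) = ind (u @ v) t" .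
qed

lemma H:
  assumes "finite A" "finite B" "{u. p u \<noteq> 0} \<subseteq> A" "{u. q u \<noteq> 0} \<subseteq> B"
  shows "nc_mul p q w = (\<Sum>x\<in>A \<times> B. if fst x @ snd x = w then p (fst x) * q (snd x) else 0)"
proof -
  have "p (take i w) * q (drop i w) = (\<Sum>x\<in>A \<times> B. if take i w = fst x \<and> drop i w = snd x then p (fst x) * q (snd x) else 0)" for i
  proof -
    have "(\<Sum>x\<in>A \<times> B. if take i w = fst x \<and> drop i w = snd x then p (fst x) * q (snd x) else 0)
       = (\<Sum>x\<in>A \<times> B. if x = (take i w, drop i w) then p (fst x) * q (snd x) else 0)"
      by (rule sum.cong) auto
    also have "\<dots> = (if (take i w, drop i w) \<in> A \<times> B then p (take i w) * q (drop i w) else 0)"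
      using assms by (subst sum.delta) auto
    also have "\<dots> = p (take i w) * q (drop i w)" proof (cases "(take i w, drop i w) \<in> A \<times> B")
      case False
      then have "p (take i w) = 0 \<or> q (drop i w) = 0" using assms(3,4) by blast
      then show ?thesis using False by auto
    qed simp
    finally show ?thesis by simp
  qed
  then have "nc_mul p q w = (\<Sum>i\<le>length w. \<Sum>x\<in>A \<times> B. if take i w = fst x \<and> drop i w = snd x then p (fst x) * q (snd x) else 0)"
    unfolding nc_mul_def by simp
  also have "\<dots> = (\<Sum>x\<in>A \<times> B. \<Sum>i\<le>length w. if take i w = fst x \<and> drop i w = snd x then p (fst x) * q (snd x) else 0)"
    by (rule sum.swap)
  also have "\<dots> = (\<Sum>x\<in>A \<times> B. if fst x @ snd x = w then p (fst x) * q (snd x) else 0)"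
    by (subst K) simp
  finally show ?thesis .
qed

lemma fs_mul:
  assumes "fs p" "fs q"
  shows "fs (nc_mul p q)"
proof -
  let ?A = "{u. p u \<noteq> 0}" and ?B = "{u. q u \<noteq> 0}"
  have "{w. nc_mul p q w \<noteq> 0} \<subseteq> (\<lambda>x. fst x @ snd x) ` (?A \<times> ?B)"
  proof
    fix w assume "w \<in> {w. nc_mul p q w \<noteq> 0}"
    then have "(\<Sum>x\<in>?A \<times> ?B. if fst x @ snd x = w then p (fst x) * q (snd x) else 0) \<noteq> 0"
      by (simp only: H[OF assms order_refl order_refl, symmetric]) simp
    then obtain x where x1: "x \<in> ?A \<times> ?B" and x2: "(if fst x @ snd x = w then p (fst x) * q (snd x) else 0) \<noteq> 0"
      by (rule sum.not_neutral_contains_not_neutral)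
    from x2 have "fst x @ snd x = w" by (cases "fst x @ snd x = w") simp_all
    note x1 this
    then show "w \<in> (\<lambda>x. fst x @ snd x) ` (?A \<times> ?B)" by (metis (no_types, lifting) image_eqI)
  qed
  then show ?thesis by (rule finite_subset) (intro finite_imageI finite_cartesian_product assms)
qed

lemma fs_add: "fs p \<Longrightarrow> fs q \<Longrightarrow> fs (\<lambda>w. p w + q w)"
  by (rule finite_subset[of _ "{u. p u \<noteq> 0} \<union> {u. q u \<noteq> 0}"]) auto
lemma fs_sub: "fs p \<Longrightarrow> fs q \<Longrightarrow> fs (\<lambda>w. p w - q w)"
  by (rule finite_subset[of _ "{u. p u \<noteq> 0} \<union> {u. q u \<noteq> 0}"]) auto
lemma fs_smult: "fs p \<Longrightarrow> fs (\<lambda>w. c * p w)"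
  by (rule finite_subset[of _ "{u. p u \<noteq> 0}"]) auto
lemma fs_br: "fs p \<Longrightarrow> fs q \<Longrightarrow> fs (lie_br p q)"
  unfolding lie_br_def by (intro fs_sub fs_mul)

lemma fs_lie: "p \<in> lie_elems \<Longrightarrow> fs p"
  by (induction rule: lie_elems.induct) (auto simp: nc_var_ind fs_ind fs_add fs_smult fs_br)

lemma G:
  assumes "fs p" "fs q"
  shows "Lin F (nc_mul p q) = (\<Sum>u\<in>{u. p u \<noteq> 0}. \<Sum>v\<in>{u. q u \<noteq> 0}. p u * q v * F (u @ v))"
proof -
  let ?A = "{u. p u \<noteq> 0}" and ?B = "{u. q u \<noteq> 0}"
  let ?C = "(\<lambda>x. fst x @ snd x) ` (?A \<times> ?B)"
  have sub: "{w. nc_mul p q w \<noteq> 0} \<subseteq> ?C"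
  proof
    fix w assume "w \<in> {w. nc_mul p q w \<noteq> 0}"
    then have "(\<Sum>x\<in>?A \<times> ?B. if fst x @ snd x = w then p (fst x) * q (snd x) else 0) \<noteq> 0"
      by (simp only: H[OF assms order_refl order_refl, symmetric]) simp
    then obtain x where x1: "x \<in> ?A \<times> ?B" and x2: "(if fst x @ snd x = w then p (fst x) * q (snd x) else 0) \<noteq> 0"
      by (rule sum.not_neutral_contains_not_neutral)
    from x2 have "fst x @ snd x = w" by (cases "fst x @ snd x = w") simp_all
    note x1 this
    then show "w \<in> ?C" by (metis (no_types, lifting) image_eqI)
  qed
  have fC: "finite ?C" using assms by auto
  have "Lin F (nc_mul p q) = (\<Sum>w\<in>?C. nc_mul p q w * F w)" by (rule Lin_superset[OF fC sub])
  also have "\<dots> = (\<Sum>w\<in>?C. \<Sum>x\<in>?A \<times> ?B. if fst x @ snd x = w then p (fst x) * q (snd x) * F w else 0)"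
  proof (rule sum.cong[OF refl])
    fix w
    show "nc_mul p q w * F w = (\<Sum>x\<in>?A \<times> ?B. if fst x @ snd x = w then p (fst x) * q (snd x) * F w else 0)"
    proof -
      have "nc_mul p q w * F w = (\<Sum>x\<in>?A \<times> ?B. if fst x @ snd x = w then p (fst x) * q (snd x) else 0) * F w"
        by (rule arg_cong[where f="\<lambda>z. z * F w"], rule H[OF assms order_refl order_refl])
      also have "\<dots> = (\<Sum>x\<in>?A \<times> ?B. (if fst x @ snd x = w then p (fst x) * q (snd x) else 0) * F w)"
        by (rule sum_distrib_right)
      also have "\<dots> = (\<Sum>x\<in>?A \<times> ?B. if fst x @ snd x = w then p (fst x) * q (snd x) * F w else 0)"
        by (rule sum.cong[OF refl]) simp
      finally show ?thesis .
    qed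
  qed
  also have "\<dots> = (\<Sum>x\<in>?A \<times> ?B. \<Sum>w\<in>?C. if w = fst x @ snd x then p (fst x) * q (snd x) * F w else 0)"
    by (subst sum.swap) (rule sum.cong[OF refl], rule sum.cong[OF refl], auto)
  also have "\<dots> = (\<Sum>x\<in>?A \<times> ?B. p (fst x) * q (snd x) * F (fst x @ snd x))"
    using fC by (intro sum.cong) (auto simp: sum.delta')
  also have "\<dots> = (\<Sum>u\<in>?A. \<Sum>v\<in>?B. p u * q v * F (u @ v))"
    by (simp add: sum.cartesian_product split_def)
  finally show ?thesis .
qed



definition brw :: "gvar \<Rightarrow> gvar list \<Rightarrow> 'a::comm_ring_1 ncpoly" where
  "brw z xs = foldl (\<lambda>p x. lie_br p (nc_var x)) (nc_var z) xs"

lemma brw_snoc: "brw z (xs @ [x]) = lie_br (brw z xs) (nc_var x)"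
  by (simp add: brw_def)

lemma brw_append: "brw z (xs @ ys) = foldl (\<lambda>p x. lie_br p (nc_var x)) (brw z xs) ys"
  by (simp add: brw_def)

lemma brw_lie: "(brw z xs :: 'a::field ncpoly) \<in> lie_elems"
  by (induction xs rule: rev_induct) (auto simp: brw_snoc brw_def intro: lie_elems.intros)

lemma fs_brw: "fs (brw z xs :: 'a::field ncpoly)"
  by (rule fs_lie[OF brw_lie])

lemma fs_var: "fs (nc_var x)" by (simp add: nc_var_ind fs_ind)

lemma foldr_subst: "foldr (\<lambda>x acc. nc_mul (nc_var (\<rho> x)) acc) u nc_one = (ind (map \<rho> u) :: 'a::comm_ring_1 ncpoly)"
  by (induction u) (simp_all add: nc_one_ind nc_var_ind nc_mul_ind)

lemma subst_Lin: "nc_subst (\<lambda>x. nc_var (\<rho> x)) p = (\<lambda>t. Lin (\<lambda>u. ind (map \<rho> u) t) p)"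
  unfolding nc_subst_def Lin_def foldr_subst by simp

lemma subst_sub: "fs p \<Longrightarrow> fs q \<Longrightarrow> nc_subst (\<lambda>x. nc_var (\<rho> x)) (\<lambda>w. p w - q w)
   = (\<lambda>t. nc_subst (\<lambda>x. nc_var (\<rho> x)) p t - nc_subst (\<lambda>x. nc_var (\<rho> x)) q t)"
  unfolding subst_Lin by (simp add: Lin_sub)

lemma subst_mul:
  fixes p q :: "'a::field ncpoly"
  assumes "fs p" "fs q"
  shows "nc_subst (\<lambda>x. nc_var (\<rho> x)) (nc_mul p q)
       = nc_mul (nc_subst (\<lambda>x. nc_var (\<rho> x)) p) (nc_subst (\<lambda>x. nc_var (\<rho> x)) q)"
proof
  fix t
  let ?A = "{u. p u \<noteq> 0}" and ?B = "{u. q u \<noteq> 0}"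
  have "nc_subst (\<lambda>x. nc_var (\<rho> x)) (nc_mul p q) t
      = (\<Sum>u\<in>?A. \<Sum>v\<in>?B. p u * q v * ind (map \<rho> (u @ v)) t)"
    unfolding subst_Lin by (rule G[OF assms])
  also have "\<dots> = (\<Sum>u\<in>?A. \<Sum>v\<in>?B. if map \<rho> u @ map \<rho> v = t then p u * q v else 0)"
    by (intro sum.cong refl) (auto simp: ind_def)
  also have "\<dots> = (\<Sum>u\<in>?A. \<Sum>v\<in>?B. \<Sum>i\<le>length t. if take i t = map \<rho> u \<and> drop i t = map \<rho> v then p u * q v else 0)"
    by (simp only: K)
  also have "\<dots> = (\<Sum>i\<le>length t. \<Sum>u\<in>?A. \<Sum>v\<in>?B. if take i t = map \<rho> u \<and> drop i t = map \<rho> v then p u * q v else 0)"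
    by (subst sum.swap) (subst (2) sum.swap, rule refl)
  also have "\<dots> = (\<Sum>i\<le>length t. (\<Sum>u\<in>?A. p u * ind (map \<rho> u) (take i t)) * (\<Sum>v\<in>?B. q v * ind (map \<rho> v) (drop i t)))"
    by (intro sum.cong refl) (auto simp: sum_product ind_def intro!: sum.cong)
  also have "\<dots> = nc_mul (nc_subst (\<lambda>x. nc_var (\<rho> x)) p) (nc_subst (\<lambda>x. nc_var (\<rho> x)) q) t"
    unfolding subst_Lin nc_mul_def Lin_def by simp
  finally show "nc_subst (\<lambda>x. nc_var (\<rho> x)) (nc_mul p q) t
       = nc_mul (nc_subst (\<lambda>x. nc_var (\<rho> x)) p) (nc_subst (\<lambda>x. nc_var (\<rho> x)) q) t" .
qed

lemma subst_br:
  fixes p q :: "'a::field ncpoly"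
  assumes "fs p" "fs q"
  shows "nc_subst (\<lambda>x. nc_var (\<rho> x)) (lie_br p q)
       = lie_br (nc_subst (\<lambda>x. nc_var (\<rho> x)) p) (nc_subst (\<lambda>x. nc_var (\<rho> x)) q)"
  unfolding lie_br_def
  by (simp add: subst_sub fs_mul assms subst_mul)

lemma subst_var: "nc_subst (\<lambda>x. nc_var (\<rho> x)) (nc_var y) = (nc_var (\<rho> y) :: 'a::field ncpoly)"
proof -
  have "nc_subst (\<lambda>x. nc_var (\<rho> x)) (nc_var y) = (\<lambda>t. Lin (\<lambda>u. ind (map \<rho> u) t) (nc_var y :: 'a ncpoly))"
    by (rule subst_Lin)
  also have "\<dots> = (\<lambda>t. ind [\<rho> y] t)" by (simp add: nc_var_ind Lin_ind)
  also have "\<dots> = nc_var (\<rho> y)" by (simp add: nc_var_ind)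
  finally show ?thesis .
qed

lemma subst_brw: "nc_subst (\<lambda>x. nc_var (\<rho> x)) (brw z xs) = (brw (\<rho> z) (map \<rho> xs) :: 'a::field ncpoly)"
proof (induction xs rule: rev_induct)
  case Nil
  then show ?case by (simp add: brw_def subst_var)
next
  case (snoc x xs)
  then show ?case by (simp add: brw_snoc subst_br fs_brw fs_var subst_var)
qed



definition Mw :: "(gvar \<Rightarrow> 'a::field mat) \<Rightarrow> gvar list \<Rightarrow> 'a mat" where
  "Mw \<phi> u = foldr (\<lambda>x acc. \<phi> x * acc) u (1\<^sub>m 2)"

lemma eval_Lin: "eval_UT2 \<phi> p i j = Lin (\<lambda>u. Mw \<phi> u $$ (i,j)) p"
  by (simp add: eval_UT2_def Lin_def Mw_def)

lemma phi_carrier: "graded_UT2_eval \<phi> \<Longrightarrow> \<phi> x \<in> carrier_mat 2 2"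
  by (cases x) (auto simp: graded_UT2_eval_def)

lemma Mw_carrier: "graded_UT2_eval \<phi> \<Longrightarrow> Mw \<phi> u \<in> carrier_mat 2 2"
  by (induction u) (auto simp: Mw_def intro!: mult_carrier_mat[OF phi_carrier])

lemma Mw_append: "graded_UT2_eval \<phi> \<Longrightarrow> Mw \<phi> (u @ v) = Mw \<phi> u * Mw \<phi> v"
proof (induction u)
  case Nil
  then show ?case using Mw_carrier[OF Nil, of v] by (simp add: Mw_def)
next
  case (Cons x u)
  have "Mw \<phi> ((x # u) @ v) = \<phi> x * (Mw \<phi> u * Mw \<phi> v)" using Cons by (simp add: Mw_def)
  also have "\<dots> = (\<phi> x * Mw \<phi> u) * Mw \<phi> v"
    using phi_carrier[OF Cons.prems] Mw_carrier[OF Cons.prems] by (metis assoc_mult_mat)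
  finally show ?case by (simp add: Mw_def)
qed

lemma entry2:
  fixes A B :: "'a::field mat"
  assumes "A \<in> carrier_mat 2 2" "B \<in> carrier_mat 2 2" "i < 2" "j < 2"
  shows "(A * B) $$ (i,j) = A $$ (i,0) * B $$ (0,j) + A $$ (i,1) * B $$ (1,j)"
proof -
  have "(A * B) $$ (i,j) = (\<Sum>k\<in>{0..<2}. A $$ (i,k) * B $$ (k,j))"
    using assms by (simp add: scalar_prod_def)
  also have "\<dots> = A $$ (i,0) * B $$ (0,j) + A $$ (i,1) * B $$ (1,j)"
    by (simp add: numeral_2_eq_2)
  finally show ?thesis .
qed

lemma eval_mul:
  fixes p q :: "'a::field ncpoly"
  assumes g: "graded_UT2_eval \<phi>" and fp: "fs p" and fq: "fs q" and ij: "i < 2" "j < 2"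
  shows "eval_UT2 \<phi> (nc_mul p q) i j
       = eval_UT2 \<phi> p i 0 * eval_UT2 \<phi> q 0 j + eval_UT2 \<phi> p i 1 * eval_UT2 \<phi> q 1 j"
proof -
  let ?A = "{u. p u \<noteq> 0}" and ?B = "{u. q u \<noteq> 0}"
  let ?M = "Mw \<phi>"
  have "eval_UT2 \<phi> (nc_mul p q) i j = (\<Sum>u\<in>?A. \<Sum>v\<in>?B. p u * q v * ?M (u @ v) $$ (i,j))"
    unfolding eval_Lin by (rule G[OF fp fq])
  also have "\<dots> = (\<Sum>u\<in>?A. \<Sum>v\<in>?B. (p u * ?M u $$ (i,0)) * (q v * ?M v $$ (0,j))
                     + (p u * ?M u $$ (i,1)) * (q v * ?M v $$ (1,j)))"
    by (intro sum.cong refl)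
       (simp add: Mw_append[OF g] entry2[OF Mw_carrier[OF g] Mw_carrier[OF g] ij] algebra_simps)
  also have "\<dots> = (\<Sum>u\<in>?A. p u * ?M u $$ (i,0)) * (\<Sum>v\<in>?B. q v * ?M v $$ (0,j))
               + (\<Sum>u\<in>?A. p u * ?M u $$ (i,1)) * (\<Sum>v\<in>?B. q v * ?M v $$ (1,j))"
    by (simp add: sum_product sum.distrib)
  also have "\<dots> = eval_UT2 \<phi> p i 0 * eval_UT2 \<phi> q 0 j + eval_UT2 \<phi> p i 1 * eval_UT2 \<phi> q 1 j"
    by (simp add: eval_Lin Lin_def)
  finally show ?thesis .
qed

lemma eval_sub: "fs p \<Longrightarrow> fs q \<Longrightarrow> eval_UT2 \<phi> (\<lambda>w. p w - q w) i j = eval_UT2 \<phi> p i j - eval_UT2 \<phi> q i j"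
  by (simp add: eval_Lin Lin_sub)

lemma eval_var: "graded_UT2_eval \<phi> \<Longrightarrow> eval_UT2 \<phi> (nc_var x) i j = \<phi> x $$ (i,j)"
  unfolding eval_Lin nc_var_ind Lin_ind using phi_carrier[of \<phi> x] by (simp add: Mw_def)

lemma less2: "i < (2::nat) \<Longrightarrow> i = 0 \<or> i = 1" by auto

lemma eval_brw:
  fixes \<phi> :: "gvar \<Rightarrow> 'a::field mat"
  assumes g: "graded_UT2_eval \<phi>" and ys: "\<forall>x\<in>set xs. \<exists>k. x = Y k" and ij: "i < 2" "j < 2"
  shows "eval_UT2 \<phi> (brw (Z k) xs) i j
    = (if i = 0 \<and> j = 1 then \<phi> (Z k) $$ (0,1) * prod_list (map (\<lambda>y. \<phi> y $$ (1,1) - \<phi> y $$ (0,0)) xs) else 0)"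
  using ys ij
proof (induction xs arbitrary: i j rule: rev_induct)
  case Nil
  then show ?case using g by (auto simp: brw_def eval_var graded_UT2_eval_def dest!: less2)
next
  case (snoc x xs)
  obtain m where xm: "x = Y m" using snoc.prems by auto
  have IH: "\<And>i j. i < 2 \<Longrightarrow> j < 2 \<Longrightarrow> eval_UT2 \<phi> (brw (Z k) xs) i j
    = (if i = 0 \<and> j = 1 then \<phi> (Z k) $$ (0,1) * prod_list (map (\<lambda>y. \<phi> y $$ (1,1) - \<phi> y $$ (0,0)) xs) else 0)"
    using snoc by auto
  have d: "\<phi> (Y m) $$ (0,1) = 0" "\<phi> (Y m) $$ (1,0) = 0" "\<phi> (Y m) $$ (0,Suc 0) = 0" "\<phi> (Y m) $$ (Suc 0,0) = 0"
    using g by (auto simp: graded_UT2_eval_def)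
  let ?P = "brw (Z k) xs :: 'a ncpoly"
  have "eval_UT2 \<phi> (brw (Z k) (xs @ [x])) i j
     = eval_UT2 \<phi> (nc_mul ?P (nc_var x)) i j - eval_UT2 \<phi> (nc_mul (nc_var x) ?P) i j"
    unfolding brw_snoc lie_br_def by (rule eval_sub) (simp_all add: fs_mul fs_brw fs_var)
  also have "\<dots> = (eval_UT2 \<phi> ?P i 0 * \<phi> x $$ (0,j) + eval_UT2 \<phi> ?P i 1 * \<phi> x $$ (1,j))
       - (\<phi> x $$ (i,0) * eval_UT2 \<phi> ?P 0 j + \<phi> x $$ (i,1) * eval_UT2 \<phi> ?P 1 j)"
    using snoc.prems by (simp add: eval_mul[OF g] fs_brw fs_var eval_var[OF g])
  also have "\<dots> = (if i = 0 \<and> j = 1 then \<phi> (Z k) $$ (0,1) * prod_list (map (\<lambda>y. \<phi> y $$ (1,1) - \<phi> y $$ (0,0)) (xs @ [x])) else 0)"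
    using snoc.prems less2[of i] less2[of j] by (auto simp: IH d xm algebra_simps)
  finally show ?case .
qed



definition ysof :: "nat list \<Rightarrow> gvar list" where
  "ysof as = concat (map (\<lambda>k. replicate (as ! k) (Y k)) [0..<length as])"

lemma comm_B_brw: "comm_B as = brw (Z 0) (ysof as)"
  by (simp add: comm_B_def brw_def ysof_def)

lemma cnt: "count (mset (concat (map (\<lambda>k. replicate (c k) (v k)) [0..<n]))) x = (\<Sum>k<n. if v k = x then c k else 0)"
  by (induction n) auto

lemma prod_perm:
  fixes f :: "'a \<Rightarrow> 'b::comm_monoid_mult"
  assumes "mset xs = mset ys"
  shows "prod_list (map f xs) = prod_list (map f ys)"
proof -
  have e: "prod_list (map f zs) = prod_mset (image_mset f (mset zs))" for zs
    by (simp only: mset_map[symmetric] prod_mset_prod_list)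
  show ?thesis by (simp only: e assms)
qed

lemma eval_comb: "fs p \<Longrightarrow> fs q \<Longrightarrow> eval_UT2 \<phi> (\<lambda>w. p w + c * q w) i j = eval_UT2 \<phi> p i j + c * eval_UT2 \<phi> q i j"
  using Lin_lin[of p q "\<lambda>u. Mw \<phi> u $$ (i,j)" 1 c] by (simp add: eval_Lin)

lemma foldl_J:
  assumes "T_ideal J" "p \<in> J"
  shows "foldl (\<lambda>p x. lie_br p (nc_var x)) p rs \<in> J"
  using assms(2)
proof (induction rs arbitrary: p)
  case (Cons r rs)
  have "nc_var r \<in> lie_elems" by (rule lie_elems.var)
  then have "lie_br p (nc_var r) \<in> J" using assms(1) Cons.prems by (auto simp: T_ideal_def)
  then show ?case using Cons.IH by simp
qed simp

lemma mset_incl: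
  assumes mono: "strict_mono_on {..<length as} \<psi>"
    and le: "\<forall>i<length as. \<psi> i < length bs \<and> as ! i \<le> bs ! (\<psi> i)"
  shows "mset (concat (map (\<lambda>k. replicate (as ! k) (Y (\<psi> k))) [0..<length as])) \<subseteq># mset (ysof bs)"
  unfolding subseteq_mset_def ysof_def cnt
proof
  fix x
  let ?n = "length as" and ?m = "length bs"
  have "(\<Sum>k<?n. if Y (\<psi> k) = x then as ! k else 0) \<le> (\<Sum>k<?n. if Y (\<psi> k) = x then bs ! (\<psi> k) else 0)"
    using le by (intro sum_mono) auto
  also have "\<dots> = (\<Sum>j\<in>\<psi> ` {..<?n}. if Y j = x then bs ! j else 0)"
    using strict_mono_on_imp_inj_on[OF mono] by (simp add: sum.reindex)
  also have "\<dots> \<le> (\<Sum>j<?m. if Y j = x then bs ! j else 0)"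
    using le by (intro sum_mono2) auto
  finally show "(\<Sum>k<?n. if Y (\<psi> k) = x then as ! k else 0) \<le> (\<Sum>j<?m. if Y j = x then bs ! j else 0)" .
qed

theorem mainTheorem4:
  assumes "infinite (UNIV :: 'a::field set)"
    and "in_B_seq as" and "in_B_seq bs"
    and "seq_le as bs"
  shows "(comm_B bs :: 'a ncpoly) \<in> T_ideal_gen (insert (comm_B as) UT2_ids)"
  unfolding T_ideal_gen_def
proof (rule InterI)
  fix J :: "'a ncpoly set"
  assume "J \<in> {J. T_ideal J \<and> insert (comm_B as) UT2_ids \<subseteq> J}"
  then have TJ: "T_ideal J" and fJ: "comm_B as \<in> J" and IJ: "UT2_ids \<subseteq> J" by auto
  obtain \<psi> :: "nat \<Rightarrow> nat" where mono: "strict_mono_on {..<length as} \<psi>"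
    and le: "\<forall>i<length as. \<psi> i < length bs \<and> as ! i \<le> bs ! (\<psi> i)"
    using assms(4) unfolding seq_le_def by blast
  define \<rho> where "\<rho> = (\<lambda>x. case x of Y k \<Rightarrow> Y (\<psi> k) | Z k \<Rightarrow> Z k)"
  have gs: "graded_subst (\<lambda>x. (nc_var (\<rho> x) :: 'a ncpoly))"
    unfolding graded_subst_def
  proof (intro allI conjI)
    fix i
    show "nc_var (\<rho> (Y i)) \<in> lie_elems" by (rule lie_elems.var)
    show "nc_var (\<rho> (Z i)) \<in> lie_elems" by (rule lie_elems.var)
    show "hom_even (nc_var (\<rho> (Y i)) :: 'a ncpoly)" by (simp add: \<rho>_def hom_even_def nc_var_def zdeg_def)
    show "hom_odd (nc_var (\<rho> (Z i)) :: 'a ncpoly)" by (simp add: \<rho>_def hom_odd_def nc_var_def zdeg_def)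
  qed
  define ysa where "ysa = map \<rho> (ysof as)"
  have ysa_eq: "ysa = concat (map (\<lambda>k. replicate (as ! k) (Y (\<psi> k))) [0..<length as])"
    unfolding ysa_def ysof_def by (simp add: map_concat \<rho>_def comp_def map_replicate)
  have h1: "(brw (Z 0) ysa :: 'a ncpoly) \<in> J"
  proof -
    have "nc_subst (\<lambda>x. nc_var (\<rho> x)) (comm_B as) \<in> J" using TJ fJ gs by (auto simp: T_ideal_def)
    then show ?thesis unfolding comm_B_brw subst_brw ysa_def by (simp add: \<rho>_def)
  qed
  obtain C where C: "mset (ysof bs) = mset ysa + C"
    using mset_incl[OF mono le] ysa_eq mset_subset_eq_exists_conv by metis
  obtain rs where rs: "mset rs = C" using ex_mset by blast
  define hs where "hs = ysa @ rs"
  have hJ: "(brw (Z 0) hs :: 'a ncpoly) \<in> J"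
    unfolding hs_def brw_append by (rule foldl_J[OF TJ h1])
  have msets: "mset hs = mset (ysof bs)" using C rs by (simp add: hs_def)
  have Yb: "\<forall>x\<in>set (ysof bs). \<exists>k. x = Y k" by (auto simp: ysof_def)
  have Yh: "\<forall>x\<in>set hs. \<exists>k. x = Y k"
  proof
    fix x assume "x \<in> set hs"
    then have "x \<in> set (ysof bs)" using msets by (metis set_mset_mset)
    then show "\<exists>k. x = Y k" using Yb by blast
  qed
  let ?g = "brw (Z 0) (ysof bs) :: 'a ncpoly"
  let ?h = "brw (Z 0) hs :: 'a ncpoly"
  define d where "d = (\<lambda>w. ?g w + (-1) * ?h w)"
  have dL: "d \<in> lie_elems" unfolding d_def by (intro lie_elems.add lie_elems.smult brw_lie)
  have dI: "d \<in> UT2_ids"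
    unfolding UT2_ids_def
  proof (intro CollectI conjI dL allI impI)
    fix \<phi> :: "gvar \<Rightarrow> 'a mat" and i j :: nat
    assume g: "graded_UT2_eval \<phi>" and ij: "i < 2" "j < 2"
    have "eval_UT2 \<phi> d i j = eval_UT2 \<phi> ?g i j + (-1) * eval_UT2 \<phi> ?h i j"
      unfolding d_def by (rule eval_comb) (simp_all add: fs_brw)
    also have "\<dots> = 0"
      using eval_brw[OF g Yb ij, of 0] eval_brw[OF g Yh ij, of 0] prod_perm[OF msets, of "\<lambda>y. \<phi> y $$ (1,1) - \<phi> y $$ (0,0)"] by simp
    finally show "eval_UT2 \<phi> d i j = 0" .
  qed
  have "(\<lambda>w. ?h w + d w) \<in> J" using TJ hJ IJ dI by (auto simp: T_ideal_def)
  moreover have "(\<lambda>w. ?h w + d w) = ?g" by (simp add: d_def fun_eq_iff)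
  ultimately show "(comm_B bs :: 'a ncpoly) \<in> J" by (simp add: comm_B_brw)
qed


end
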